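(* Let $n \ge 2$ and let $S = s_1, s_2, \ldots, s_m$ be a sequence of messages, each drawn from a fixed set $M$ of $n$ possible messages, which a number of clients want to send to a server (each message of $S$ is held by some client). Suppose there is a dynamic instantaneous compression algorithm which, when applied to $S$, produces an encoding of $B$ bits. Then for every $k \ge 1$ there is a dynamic asymmetric communication protocol for sending $S$ to the server with which the server sends at most $O(n^{1/k}\log n)$ bits to each client (for each message that client sends), and the clients send, in total, at most $kB + 2|S|$ bits.
   Context: A code-tree over the alphabet $M$ is a binary tree in which left edges are labelled $0$, right edges are labelled $1$, and leaves are labelled with elements of $M$; the codeword of a leaf's label is the binary string on the path from the root to that leaf. A dynamic instantaneous (prefix-free) compression algorithm consists of an encoder and a decoder which each maintain a code-tree, initialized and updated by the same deterministic rule depending only on the characters processed so far: the encoder makes a single pass over the input string, and upon reading each character $a$ it writes the codeword of $a$ in its current code-tree and then updates the code-tree; the decoder reads the encoding codeword by codeword, outputs the corresponding character and updates its code-tree in the same way. The encoding of $S$ is the concatenation of the codewords written, and $B$ is its length in bits. In the communication setting, at any time the server knows all messages it has received so far, while each client knows only its own messages and does not observe communication between the server or other clients; the server has no knowledge of the distribution of the messages (this is what "dynamic" means for a protocol). The protocol must allow the server to recover every message of $S$. Logarithms are base 2; the $O(\cdot)$ is as $n \to \infty$. *)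

theory Defs
  imports Complex_Main
begin

text \<open>An internal node has a left child
  (edge labelled 0 = False) and/or a right child (edge labelled 1 = True).\<close>

datatype ctree = Leaf nat | Node "ctree option" "ctree option"

fun ct_wf :: "ctree \<Rightarrow> bool" where
  "ct_wf (Leaf a) = True"
| "ct_wf (Node None None) = False"
| "ct_wf (Node l r) = (pred_option ct_wf l \<and> pred_option ct_wf r)"

fun ct_labels :: "ctree \<Rightarrow> nat list" where
  "ct_labels (Leaf a) = [a]"
| "ct_labels (Node l r) =
     (case l of None \<Rightarrow> [] | Some t \<Rightarrow> ct_labels t) @
     (case r of None \<Rightarrow> [] | Some t \<Rightarrow> ct_labels t)"

fun ct_codes :: "ctree \<Rightarrow> (nat \<times> bool list) list" where
  "ct_codes (Leaf a) = [(a, [])]"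
| "ct_codes (Node l r) =
     map (\<lambda>(a, w). (a, False # w)) (case l of None \<Rightarrow> [] | Some t \<Rightarrow> ct_codes t) @
     map (\<lambda>(a, w). (a, True # w)) (case r of None \<Rightarrow> [] | Some t \<Rightarrow> ct_codes t)"

definition codeword :: "ctree \<Rightarrow> nat \<Rightarrow> bool list" where
  "codeword t a = the (map_of (ct_codes t) a)"

definition code_tree :: "nat set \<Rightarrow> ctree \<Rightarrow> bool" where
  "code_tree M t \<longleftrightarrow> ct_wf t \<and> distinct (ct_labels t) \<and> set (ct_labels t) = M"

text \<open>A dynamic instantaneous compression algorithm is determined by the deterministic
  rule giving the current code-tree as a function of the characters processed so far
  (shared by encoder and decoder).\<close>
definition dyn_code_alg :: "nat set \<Rightarrow> (nat list \<Rightarrow> ctree) \<Rightarrow> bool" where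
  "dyn_code_alg M T \<longleftrightarrow> (\<forall>xs \<in> lists M. code_tree M (T xs))"

definition enc_length :: "(nat list \<Rightarrow> ctree) \<Rightarrow> nat list \<Rightarrow> nat" where
  "enc_length T S = (\<Sum>i<length S. length (codeword (T (take i S)) (S ! i)))"

datatype speaker = Srv | Cli | Stop

text \<open>Server history: list of (client, message, transcript) of all earlier messages.
  Client history: list of (message, transcript) of the client's own earlier messages.
  In the exchange for one message, bits are sent one at a time; who speaks next
  (or whether the exchange is over) is decided by each party from its own knowledge,
  and the two decisions must agree.  The server decides with its knowledge (history,
  identity of current client, transcript so far); the client with its knowledge
  (its identity, own history, current message, transcript so far).\<close>
record protocol =
  s_turn :: "(nat \<times> nat \<times> bool list) list \<Rightarrow> nat \<Rightarrow> bool list \<Rightarrow> speaker"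
  s_bit  :: "(nat \<times> nat \<times> bool list) list \<Rightarrow> nat \<Rightarrow> bool list \<Rightarrow> bool"
  s_out  :: "(nat \<times> nat \<times> bool list) list \<Rightarrow> nat \<Rightarrow> bool list \<Rightarrow> nat"
  c_turn :: "nat \<Rightarrow> (nat \<times> bool list) list \<Rightarrow> nat \<Rightarrow> bool list \<Rightarrow> speaker"
  c_bit  :: "nat \<Rightarrow> (nat \<times> bool list) list \<Rightarrow> nat \<Rightarrow> bool list \<Rightarrow> bool"

definition exch_ok :: "protocol \<Rightarrow> (nat \<times> nat \<times> bool list) list \<Rightarrow> nat \<Rightarrow>
    (nat \<times> bool list) list \<Rightarrow> nat \<Rightarrow> bool list \<Rightarrow> bool" where
  "exch_ok P sh c ch x t \<longleftrightarrow>
     (\<forall>j < length t.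
        s_turn P sh c (take j t) = c_turn P c ch x (take j t) \<and>
        s_turn P sh c (take j t) \<noteq> Stop \<and>
        t ! j = (if s_turn P sh c (take j t) = Srv then s_bit P sh c (take j t)
                 else c_bit P c ch x (take j t))) \<and>
     s_turn P sh c t = Stop \<and> c_turn P c ch x t = Stop"

definition srv_bits :: "protocol \<Rightarrow> (nat \<times> nat \<times> bool list) list \<Rightarrow> nat \<Rightarrow> bool list \<Rightarrow> nat" where
  "srv_bits P sh c t = card {j. j < length t \<and> s_turn P sh c (take j t) = Srv}"

definition cli_bits :: "protocol \<Rightarrow> (nat \<times> nat \<times> bool list) list \<Rightarrow> nat \<Rightarrow> bool list \<Rightarrow> nat" where
  "cli_bits P sh c t = card {j. j < length t \<and> s_turn P sh c (take j t) = Cli}"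

text \<open>Histories for message i, given the messages S, the owner map own (client holding
  each message) and transcripts ts.\<close>
definition shist :: "nat list \<Rightarrow> (nat \<Rightarrow> nat) \<Rightarrow> bool list list \<Rightarrow> nat \<Rightarrow>
    (nat \<times> nat \<times> bool list) list" where
  "shist S own ts i = map (\<lambda>j. (own j, S ! j, ts ! j)) [0..<i]"

definition chist :: "nat list \<Rightarrow> (nat \<Rightarrow> nat) \<Rightarrow> bool list list \<Rightarrow> nat \<Rightarrow>
    (nat \<times> bool list) list" where
  "chist S own ts i = map (\<lambda>j. (S ! j, ts ! j)) (filter (\<lambda>j. own j = own i) [0..<i])"

definition run_ok :: "protocol \<Rightarrow> nat list \<Rightarrow> (nat \<Rightarrow> nat) \<Rightarrow> bool list list \<Rightarrow> bool" where
  "run_ok P S own ts \<longleftrightarrow> length ts = length S \<and>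
     (\<forall>i < length S. exch_ok P (shist S own ts i) (own i) (chist S own ts i) (S ! i) (ts ! i))"

end

theory Submission
  imports Defs "HOL-Library.FuncSet"
begin

lemma fst_codes: "map fst (ct_codes t) = ct_labels t"
  by (induction t rule: ct_codes.induct) (auto split: option.splits simp: comp_def case_prod_unfold)

lemma codes_nonempty_Node: "p \<in> set (ct_codes (Node l r)) \<Longrightarrow> snd p \<noteq> []"
  by (auto split: option.splits)

lemma prefix_free:
  "(a, v) \<in> set (ct_codes t) \<Longrightarrow> (b, take m v) \<in> set (ct_codes t) \<Longrightarrow> length v \<le> m"
proof (induction t arbitrary: a b v m rule: ct_codes.induct)
  case (1 x)
  then show ?case by simp
next
  case (2 l r)
  show ?case
  proof (cases m)
    case 0
    then show ?thesis using 2(4) codes_nonempty_Node[of "(b, take m v)" l r] by auto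
  next
    case (Suc m')
    from 2(3) obtain bit v0 where v: "v = bit # v0" by (auto split: option.splits)
    show ?thesis
    proof (cases bit)
      case False
      then obtain tl where tl: "l = Some tl" "(a, v0) \<in> set (ct_codes tl)"
        using 2(3) v by (auto split: option.splits)
      have "(b, take m' v0) \<in> set (ct_codes tl)" using 2(4) v Suc False tl
        by (auto split: option.splits)
      then show ?thesis using 2(1)[OF tl(1) tl(2)] Suc v
        by (simp add: tl(1))
    next
      case True
      then obtain tr where tr: "r = Some tr" "(a, v0) \<in> set (ct_codes tr)"
        using 2(3) v by (auto split: option.splits)
      have "(b, take m' v0) \<in> set (ct_codes tr)" using 2(4) v Suc True tr
        by (auto split: option.splits)
      then show ?thesis using 2(2)[OF tr(1) tr(2)] Suc v
        by (simp add: tr(1))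
    qed
  qed
qed

lemma distinct_snd_codes: "distinct (map snd (ct_codes t))"
proof (induction t rule: ct_codes.induct)
  case (1 x)
  then show ?case by simp
next
  case (2 l r)
  have e: "map snd (map (\<lambda>(a, w). (a, c # w)) xs) = map (Cons c) (map snd xs)" for c and xs :: "(nat \<times> bool list) list"
    by (induction xs) auto
  show ?case using 2
    by (auto simp: e distinct_map inj_on_def split: option.splits; fastforce)
qed

lemma codeword_in:
  assumes "code_tree M t" "x \<in> M"
  shows "(x, codeword t x) \<in> set (ct_codes t)"
proof -
  have "x \<in> fst ` set (ct_codes t)" using assms fst_codes[of t]
    by (metis code_tree_def list.set_map)
  then obtain y where "map_of (ct_codes t) x = Some y"
    by (metis map_of_eq_None_iff not_Some_eq)
  then show ?thesis unfolding codeword_def by (simp add: map_of_SomeD)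
qed

lemma codeword_inj:
  assumes "code_tree M t" "x \<in> M" "y \<in> M" "codeword t x = codeword t y"
  shows "x = y"
proof -
  have "inj_on snd (set (ct_codes t))" using distinct_snd_codes[of t] by (simp add: distinct_map)
  then show ?thesis using codeword_in[OF assms(1,2)] codeword_in[OF assms(1,3)] assms(4)
    by (metis inj_on_def prod.inject snd_conv)
qed

lemma codeword_prefix:
  assumes "code_tree M t" "x \<in> M" "y \<in> M" "codeword t y = take m (codeword t x)"
  shows "length (codeword t x) \<le> m"
  using prefix_free[OF codeword_in[OF assms(1,2)]] codeword_in[OF assms(1,3)] assms(4) by simp


locale proto =
  fixes M :: "nat set" and T :: "nat list \<Rightarrow> ctree" and D w L k :: nat
    and enc :: "(bool list \<Rightarrow> nat option) \<Rightarrow> bool list" and idx :: "nat \<Rightarrow> bool list"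
  assumes alg: "dyn_code_alg M T"
    and idx_inj: "inj_on idx M" and idx_len: "\<And>x. x \<in> M \<Longrightarrow> length (idx x) = w"
    and enc_inj: "inj_on enc (PiE {c. length c \<le> D} (\<lambda>_. insert None (Some ` M)))"
    and enc_len: "\<And>h. h \<in> PiE {c. length c \<le> D} (\<lambda>_. insert None (Some ` M)) \<Longrightarrow> length (enc h) = L"
    and wk: "\<And>l. D < l \<Longrightarrow> w \<le> k * l + 1" and k_pos: "1 \<le> k"
begin

definition Cw :: "bool list set" where "Cw = {c. length c \<le> D}"
definition HH where "HH = PiE Cw (\<lambda>_. insert None (Some ` M))"

definition info :: "ctree \<Rightarrow> bool list \<Rightarrow> nat option" where
  "info t = restrict (\<lambda>c. if \<exists>y\<in>M. codeword t y = c then Some (SOME y. y \<in> M \<and> codeword t y = c) else None) Cw"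

definition resp :: "nat \<Rightarrow> bool list \<Rightarrow> bool list" where
  "resp x \<sigma> = (let h = inv_into HH enc \<sigma> in
     if \<exists>c\<in>Cw. h c = Some x then False # (SOME c. c \<in> Cw \<and> h c = Some x) else True # idx x)"

definition tree_of :: "(nat \<times> nat \<times> bool list) list \<Rightarrow> ctree" where
  "tree_of sh = T (map (\<lambda>p. fst (snd p)) sh)"

definition sigma :: "ctree \<Rightarrow> bool list" where "sigma t = enc (info t)"

definition complete :: "ctree \<Rightarrow> bool list \<Rightarrow> bool" where
  "complete t v = (case v of [] \<Rightarrow> False | b # r \<Rightarrow> if b then length r = w else (\<exists>y\<in>M. codeword t y = r))"

definition P :: protocol where
  "P = \<lparr> s_turn = \<lambda>sh c u. if length u < L then Srv else if complete (tree_of sh) (drop L u) then Stop else Cli,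
         s_bit = \<lambda>sh c u. sigma (tree_of sh) ! length u,
         s_out = \<lambda>sh c u. (case drop L u of [] \<Rightarrow> undefined | b # r \<Rightarrow>
                   if b then inv_into M idx r else (SOME y. y \<in> M \<and> codeword (tree_of sh) y = r)),
         c_turn = \<lambda>c ch x u. if length u < L then Srv else if length u - L < length (resp x (take L u)) then Cli else Stop,
         c_bit = \<lambda>c ch x u. resp x (take L u) ! (length u - L) \<rparr>"

lemma info_HH: "info t \<in> HH"
proof -
  have "(SOME y. y \<in> M \<and> codeword t y = c) \<in> M" if "\<exists>y\<in>M. codeword t y = c" for c
    using that by (metis (mono_tags, lifting) someI_ex)
  then show ?thesis unfolding info_def HH_def by auto
qed

lemma info_Some:
  assumes "code_tree M t" "x \<in> M" "c \<in> Cw"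
  shows "info t c = Some x \<longleftrightarrow> codeword t x = c"
proof
  assume "info t c = Some x"
  then have "\<exists>y\<in>M. codeword t y = c" and "x = (SOME y. y \<in> M \<and> codeword t y = c)"
    using assms(3) unfolding info_def by (auto split: if_splits)
  then show "codeword t x = c" by (metis (mono_tags, lifting) someI_ex)
next
  assume h: "codeword t x = c"
  have "(SOME y. y \<in> M \<and> codeword t y = c) = x"
    using h assms codeword_inj[OF assms(1)] by (metis (mono_tags, lifting) someI_ex)
  then show "info t c = Some x" using assms h unfolding info_def by auto
qed

lemma resp_sigma:
  assumes "code_tree M t" "x \<in> M"
  shows "resp x (sigma t) = (if length (codeword t x) \<le> D then False # codeword t x else True # idx x)"
proof -
  have inv: "inv_into HH enc (sigma t) = info t"
    unfolding sigma_def using enc_inj info_HH unfolding HH_def Cw_def by (simp add: inv_into_f_f)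
  have ex: "(\<exists>c\<in>Cw. info t c = Some x) \<longleftrightarrow> length (codeword t x) \<le> D"
    using info_Some[OF assms] unfolding Cw_def by auto
  have some: "length (codeword t x) \<le> D \<Longrightarrow> (SOME c. c \<in> Cw \<and> info t c = Some x) = codeword t x"
    using info_Some[OF assms] unfolding Cw_def by auto
  show ?thesis unfolding resp_def Let_def inv using ex some by auto
qed

lemma len_sigma: "length (sigma t) = L"
  unfolding sigma_def using enc_len info_HH unfolding HH_def Cw_def by auto

lemma resp_len:
  assumes "code_tree M t" "x \<in> M"
  shows "length (resp x (sigma t)) \<le> k * length (codeword t x) + 2"
proof (cases "length (codeword t x) \<le> D")
  case True
  have "length (codeword t x) \<le> k * length (codeword t x)"
    using k_pos by (metis mult_le_mono1 mult_1)
  moreover have "length (resp x (sigma t)) = length (codeword t x) + 1" using True resp_sigma[OF assms] by simp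
  ultimately show ?thesis by linarith
next
  case False
  then show ?thesis using resp_sigma[OF assms] wk[of "length (codeword t x)"] idx_len[OF assms(2)] by simp
qed

lemma not_complete:
  assumes "code_tree M t" "x \<in> M" "m < length (resp x (sigma t))"
  shows "\<not> complete t (take m (resp x (sigma t)))"
proof (cases m)
  case 0
  then show ?thesis by (simp add: complete_def)
next
  case (Suc m')
  show ?thesis
  proof (cases "length (codeword t x) \<le> D")
    case True
    then have r: "resp x (sigma t) = False # codeword t x" using resp_sigma[OF assms(1,2)] by simp
    have "\<not> (\<exists>y\<in>M. codeword t y = take m' (codeword t x))"
      using codeword_prefix[OF assms(1,2)] assms(3) r Suc by fastforce
    then show ?thesis using r Suc by (simp add: complete_def)
  next
    case False
    then have r: "resp x (sigma t) = True # idx x" using resp_sigma[OF assms(1,2)] by simp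
    then show ?thesis using Suc assms(3) idx_len[OF assms(2)] by (simp add: complete_def)
  qed
qed

lemma is_complete:
  assumes "code_tree M t" "x \<in> M"
  shows "complete t (resp x (sigma t))"
  using resp_sigma[OF assms] idx_len[OF assms(2)] assms(2) by (auto simp: complete_def)

lemma exch:
  assumes "code_tree M (tree_of sh)" "x \<in> M"
  defines "tr \<equiv> sigma (tree_of sh) @ resp x (sigma (tree_of sh))"
  shows "exch_ok P sh c ch x tr"
    and "s_out P sh c tr = x"
    and "srv_bits P sh c tr = L"
    and "cli_bits P sh c tr = length (resp x (sigma (tree_of sh)))"
proof -
  let ?t = "tree_of sh"
  let ?s = "sigma ?t"
  let ?r = "resp x ?s"
  have ls: "length ?s = L" by (rule len_sigma)
  have lo: "j < L \<Longrightarrow> take j tr = take j ?s \<and> length (take j tr) = j" for j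
    using ls unfolding tr_def by simp
  have hi: "L \<le> j \<Longrightarrow> j \<le> length tr \<Longrightarrow> take L (take j tr) = ?s \<and> drop L (take j tr) = take (j - L) ?r
      \<and> length (take j tr) = j" for j
    using ls unfolding tr_def by (auto simp: min_def)
  have turn: "s_turn P sh c (take j tr) = (if j < L then Srv else Cli)"
    "c_turn P c ch x (take j tr) = (if j < L then Srv else Cli)" if "j < length tr" for j
  proof -
    have "length tr = L + length ?r" using ls unfolding tr_def by simp
    then show "s_turn P sh c (take j tr) = (if j < L then Srv else Cli)"
      using that lo[of j] hi[of j] not_complete[OF assms(1,2), of "j - L"]
      by (auto simp: P_def)
    show "c_turn P c ch x (take j tr) = (if j < L then Srv else Cli)"
      using that lo[of j] hi[of j] \<open>length tr = L + length ?r\<close>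
      by (auto simp: P_def)
  qed
  have ltr: "length tr = L + length ?r" using ls unfolding tr_def by simp
  show "exch_ok P sh c ch x tr"
    unfolding exch_ok_def
  proof (intro conjI allI impI)
    fix j assume j: "j < length tr"
    show "s_turn P sh c (take j tr) = c_turn P c ch x (take j tr)" using turn[OF j] by simp
    show "s_turn P sh c (take j tr) \<noteq> Stop" using turn[OF j] by simp
    show "tr ! j = (if s_turn P sh c (take j tr) = Srv then s_bit P sh c (take j tr) else c_bit P c ch x (take j tr))"
    proof (cases "j < L")
      case True
      then show ?thesis using turn[OF j] lo[of j] ls unfolding tr_def by (simp add: P_def nth_append)
    next
      case False
      then show ?thesis using turn[OF j] hi[of j] j ls unfolding tr_def by (simp add: P_def nth_append)
    qed
  next
    show "s_turn P sh c tr = Stop"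
      using ls is_complete[OF assms(1,2)] unfolding tr_def by (simp add: P_def)
    show "c_turn P c ch x tr = Stop"
      using ls unfolding tr_def by (simp add: P_def)
  qed
  show "s_out P sh c tr = x"
  proof (cases "length (codeword ?t x) \<le> D")
    case True
    then show ?thesis using ls resp_sigma[OF assms(1,2)] codeword_inj[OF assms(1) _ assms(2)] assms(2)
      unfolding tr_def by (auto simp: P_def intro!: some_equality)
  next
    case False
    then show ?thesis using ls resp_sigma[OF assms(1,2)] idx_inj assms(2)
      unfolding tr_def by (auto simp: P_def)
  qed
  have "{j. j < length tr \<and> s_turn P sh c (take j tr) = Srv} = {..<L}"
    using turn ltr by (auto split: if_splits)
  then show "srv_bits P sh c tr = L" unfolding srv_bits_def by simp
  have "{j. j < length tr \<and> s_turn P sh c (take j tr) = Cli} = {L..<L + length ?r}"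
    using turn ltr by (auto split: if_splits)
  then show "cli_bits P sh c tr = length ?r" unfolding cli_bits_def by simp
qed

lemma tree_of_shist:
  assumes "i \<le> length S"
  shows "tree_of (shist S own ts i) = T (take i S)"
proof -
  have "map (\<lambda>p. fst (snd p)) (shist S own ts i) = take i S"
    using assms by (auto simp: shist_def intro!: nth_equalityI)
  then show ?thesis unfolding tree_of_def by simp
qed

lemma run:
  assumes S: "S \<in> lists M"
  shows "\<exists>ts. run_ok P S own ts \<and>
            (\<forall>i < length S. s_out P (shist S own ts i) (own i) (ts ! i) = S ! i) \<and>
            (\<forall>i < length S. srv_bits P (shist S own ts i) (own i) (ts ! i) = L) \<and>
            (\<Sum>i < length S. cli_bits P (shist S own ts i) (own i) (ts ! i))
                 \<le> k * enc_length T S + 2 * length S"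
proof -
  define ts where "ts = map (\<lambda>i. sigma (T (take i S)) @ resp (S ! i) (sigma (T (take i S)))) [0..<length S]"
  have ct: "code_tree M (tree_of (shist S own ts i))" and xm: "S ! i \<in> M"
    and tsi: "ts ! i = sigma (tree_of (shist S own ts i)) @ resp (S ! i) (sigma (tree_of (shist S own ts i)))"
    if "i < length S" for i
  proof -
    have "take i S \<in> lists M" using S by (meson in_listsD in_listsI in_set_takeD)
    then show "code_tree M (tree_of (shist S own ts i))"
      using alg that tree_of_shist[of i S] unfolding dyn_code_alg_def by simp
    show "S ! i \<in> M" using S that by (simp add: in_lists_conv_set)
    show "ts ! i = sigma (tree_of (shist S own ts i)) @ resp (S ! i) (sigma (tree_of (shist S own ts i)))"
      using that tree_of_shist[of i S] unfolding ts_def by simp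
  qed
  have "run_ok P S own ts"
    unfolding run_ok_def
  proof (intro conjI allI impI)
    show "length ts = length S" unfolding ts_def by simp
    fix i assume i: "i < length S"
    show "exch_ok P (shist S own ts i) (own i) (chist S own ts i) (S ! i) (ts ! i)"
      using exch(1)[OF ct[OF i] xm[OF i]] tsi[OF i] by simp
  qed
  moreover have "\<forall>i < length S. s_out P (shist S own ts i) (own i) (ts ! i) = S ! i"
    using exch(2)[OF ct xm] tsi by simp
  moreover have "\<forall>i < length S. srv_bits P (shist S own ts i) (own i) (ts ! i) = L"
    using exch(3)[OF ct xm] tsi by simp
  moreover have "(\<Sum>i < length S. cli_bits P (shist S own ts i) (own i) (ts ! i))
                 \<le> k * enc_length T S + 2 * length S"
  proof -
    have "(\<Sum>i < length S. cli_bits P (shist S own ts i) (own i) (ts ! i))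
        \<le> (\<Sum>i < length S. k * length (codeword (T (take i S)) (S ! i)) + 2)"
    proof (rule sum_mono)
      fix i assume "i \<in> {..<length S}"
      then have i: "i < length S" by simp
      show "cli_bits P (shist S own ts i) (own i) (ts ! i) \<le> k * length (codeword (T (take i S)) (S ! i)) + 2"
        using exch(4)[OF ct[OF i] xm[OF i]] tsi[OF i] resp_len[OF ct[OF i] xm[OF i]]
          tree_of_shist[of i S own ts] i by simp
    qed
    also have "\<dots> = k * enc_length T S + 2 * length S"
      unfolding enc_length_def by (simp only: sum.distrib sum_distrib_left) simp
    finally show ?thesis .
  qed
  ultimately show ?thesis by blast
qed

end

lemma sum_pow2_le: "(\<Sum>i\<le>(D::nat). (2::nat) ^ i) \<le> 2 ^ (D + 1)"
  by (induction D) auto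

lemma arith_part:
  fixes n k :: nat
  assumes n: "n \<ge> 2" and k: "k \<ge> 1"
  defines "D \<equiv> nat \<lfloor>log 2 (real n) / real k\<rfloor>"
  defines "w \<equiv> nat \<lceil>log 2 (real n + 1)\<rceil>"
  shows "n + 1 \<le> 2 ^ w"
    and "\<And>l. D < l \<Longrightarrow> w \<le> k * l + 1"
    and "real (2 ^ (D + 1) * w) \<le> 6 * real n powr (1 / real k) * log 2 (real n)"
proof -
  have ln1: "log 2 (real n) \<ge> 1" using n by simp
  have lnn: "log 2 (real n + 1) \<le> log 2 (real n) + 1"
  proof -
    have "log 2 (real n + 1) \<le> log 2 (2 * real n)" using n by simp
    also have "\<dots> = log 2 (real n) + 1" using n by (simp add: log_mult)
    finally show ?thesis .
  qed
  have wr: "real w < log 2 (real n) + 2" and wr2: "log 2 (real n + 1) \<le> real w"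
  proof -
    have "0 \<le> log 2 (real n + 1)" using n by simp
    then have "real w = of_int \<lceil>log 2 (real n + 1)\<rceil>" unfolding w_def by simp
    then show "real w < log 2 (real n) + 2" "log 2 (real n + 1) \<le> real w"
      using lnn by linarith+
  qed
  have "real (n + 1) = 2 powr (log 2 (real n + 1))" using n by simp
  also have "\<dots> \<le> 2 powr (real w)" using wr2 by (intro powr_mono) auto
  also have "\<dots> = real (2 ^ w)" by (simp add: powr_realpow)
  finally show "n + 1 \<le> 2 ^ w" by linarith
  have q0: "0 \<le> log 2 (real n) / real k" using ln1 k by simp
  have Dr: "real D = of_int \<lfloor>log 2 (real n) / real k\<rfloor>" unfolding D_def using q0 by simp
  have D1: "log 2 (real n) / real k < real D + 1" using Dr by linarith
  have D2: "real D \<le> log 2 (real n) / real k" using Dr by linarith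
  show "w \<le> k * l + 1" if "D < l" for l
  proof -
    have "log 2 (real n) / real k < real l" using D1 that by linarith
    then have "log 2 (real n) < real k * real l" using k by (simp add: divide_less_eq mult.commute)
    then have "real w < real (k * l) + 2" using wr by simp
    then show ?thesis by linarith
  qed
  have p: "real (2 ^ D) \<le> real n powr (1 / real k)"
  proof -
    have "real (2 ^ D) = 2 powr real D" by (simp add: powr_realpow)
    also have "\<dots> \<le> 2 powr (log 2 (real n) / real k)" using D2 by simp
    also have "\<dots> = (2 powr log 2 (real n)) powr (1 / real k)" by (simp add: powr_powr)
    also have "\<dots> = real n powr (1 / real k)" using n by simp
    finally show ?thesis .
  qed
  have "real (2 ^ (D + 1) * w) = 2 * real (2 ^ D) * real w" by simp
  also have "\<dots> \<le> 2 * (real n powr (1 / real k)) * (3 * log 2 (real n))"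
    using p wr ln1 by (intro mult_mono) auto
  also have "\<dots> = 6 * real n powr (1 / real k) * log 2 (real n)" by simp
  finally show "real (2 ^ (D + 1) * w) \<le> 6 * real n powr (1 / real k) * log 2 (real n)" .
qed

theorem theorem1:
  "\<forall>k::nat. k \<ge> 1 \<longrightarrow> (\<exists>C::real. C > 0 \<and>
     (\<forall>(M::nat set) T. finite M \<and> card M \<ge> 2 \<and> dyn_code_alg M T \<longrightarrow>
       (\<exists>P::protocol. \<forall>S \<in> lists M. \<forall>own::nat \<Rightarrow> nat.
          \<exists>ts. run_ok P S own ts \<and>
            (\<forall>i < length S. s_out P (shist S own ts i) (own i) (ts ! i) = S ! i) \<and>
            (\<forall>i < length S. real (srv_bits P (shist S own ts i) (own i) (ts ! i))
                 \<le> C * real (card M) powr (1 / real k) * log 2 (real (card M))) \<and>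
            (\<Sum>i < length S. cli_bits P (shist S own ts i) (own i) (ts ! i))
                 \<le> k * enc_length T S + 2 * length S)))"
proof (intro allI impI)
  fix k :: nat assume k: "k \<ge> 1"
  show "\<exists>C::real. C > 0 \<and>
     (\<forall>(M::nat set) T. finite M \<and> card M \<ge> 2 \<and> dyn_code_alg M T \<longrightarrow>
       (\<exists>P::protocol. \<forall>S \<in> lists M. \<forall>own::nat \<Rightarrow> nat.
          \<exists>ts. run_ok P S own ts \<and>
            (\<forall>i < length S. s_out P (shist S own ts i) (own i) (ts ! i) = S ! i) \<and>
            (\<forall>i < length S. real (srv_bits P (shist S own ts i) (own i) (ts ! i))
                 \<le> C * real (card M) powr (1 / real k) * log 2 (real (card M))) \<and>
            (\<Sum>i < length S. cli_bits P (shist S own ts i) (own i) (ts ! i))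
                 \<le> k * enc_length T S + 2 * length S))"
  proof (intro exI[of _ 6] conjI allI impI)
    fix M :: "nat set" and T
    assume a: "finite M \<and> card M \<ge> 2 \<and> dyn_code_alg M T"
    define n where "n = card M"
    define D where "D = nat \<lfloor>log 2 (real n) / real k\<rfloor>"
    define w where "w = nat \<lceil>log 2 (real n + 1)\<rceil>"
    define L where "L = 2 ^ (D + 1) * w"
    have n2: "n \<ge> 2" using a n_def by simp
    note ar = arith_part[OF n2 k, folded D_def w_def]
    have fin: "finite M" using a by simp
    have cardB: "card {xs :: bool list. length xs = m} = 2 ^ m" for m
      using card_lists_length_eq[of "UNIV :: bool set" m] by simp
    have finB: "finite {xs :: bool list. length xs = m}" for m
      using finite_lists_length_eq[of "UNIV :: bool set" m] by simp
    obtain idx where idx: "idx ` M \<subseteq> {xs :: bool list. length xs = w}" "inj_on idx M"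
      using card_le_inj[OF fin finB[of w]] ar(1) cardB[of w] n_def by fastforce
    define HH where "HH = PiE {c :: bool list. length c \<le> D} (\<lambda>_. insert None (Some ` M))"
    have finC: "finite {c :: bool list. length c \<le> D}"
      using finite_lists_length_le[of "UNIV :: bool set" D] by simp
    have cardC: "card {c :: bool list. length c \<le> D} \<le> 2 ^ (D + 1)"
      using card_lists_length_le[of "UNIV :: bool set" D] sum_pow2_le[of D] by simp
    have cardI: "card (insert None (Some ` M)) = n + 1"
      using fin n_def by (simp add: card_image)
    have finH: "finite HH" unfolding HH_def using finC fin by (intro finite_PiE) auto
    have "card HH = (n + 1) ^ card {c :: bool list. length c \<le> D}"
      unfolding HH_def using finC cardI by (simp add: card_PiE)
    also have "\<dots> \<le> (2 ^ w) ^ card {c :: bool list. length c \<le> D}"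
      using ar(1) by (simp add: power_mono)
    also have "\<dots> \<le> (2 ^ w) ^ (2 ^ (D + 1))"
      using cardC by (intro power_increasing) auto
    also have "\<dots> = 2 ^ L" unfolding L_def by (simp add: power_mult[symmetric] mult.commute)
    finally have "card HH \<le> card {xs :: bool list. length xs = L}" using cardB by simp
    then obtain enc where enc: "enc ` HH \<subseteq> {xs :: bool list. length xs = L}" "inj_on enc HH"
      using card_le_inj[OF finH finB[of L]] by blast
    interpret pr: proto M T D w L k enc idx
    proof
      show "dyn_code_alg M T" using a by simp
      show "inj_on idx M" by (rule idx(2))
      show "\<And>x. x \<in> M \<Longrightarrow> length (idx x) = w" using idx(1) by auto
      show "inj_on enc (PiE {c. length c \<le> D} (\<lambda>_. insert None (Some ` M)))" using enc(2) HH_def by simp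
      show "\<And>h. h \<in> PiE {c. length c \<le> D} (\<lambda>_. insert None (Some ` M)) \<Longrightarrow> length (enc h) = L"
        using enc(1) HH_def by auto
      show "\<And>l. D < l \<Longrightarrow> w \<le> k * l + 1" by (rule ar(2))
      show "1 \<le> k" by (rule k)
    qed
    have Lb: "real L \<le> 6 * real (card M) powr (1 / real k) * log 2 (real (card M))"
      using ar(3) L_def n_def by simp
    show "\<exists>P::protocol. \<forall>S \<in> lists M. \<forall>own::nat \<Rightarrow> nat.
          \<exists>ts. run_ok P S own ts \<and>
            (\<forall>i < length S. s_out P (shist S own ts i) (own i) (ts ! i) = S ! i) \<and>
            (\<forall>i < length S. real (srv_bits P (shist S own ts i) (own i) (ts ! i))
                 \<le> 6 * real (card M) powr (1 / real k) * log 2 (real (card M))) \<and>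
            (\<Sum>i < length S. cli_bits P (shist S own ts i) (own i) (ts ! i))
                 \<le> k * enc_length T S + 2 * length S"
    proof (intro exI[of _ pr.P] ballI allI)
      fix S :: "nat list" and own :: "nat \<Rightarrow> nat"
      assume "S \<in> lists M"
      from pr.run[OF this, of own] obtain ts where ts:
        "run_ok pr.P S own ts"
        "\<forall>i < length S. s_out pr.P (shist S own ts i) (own i) (ts ! i) = S ! i"
        "\<forall>i < length S. srv_bits pr.P (shist S own ts i) (own i) (ts ! i) = L"
        "(\<Sum>i < length S. cli_bits pr.P (shist S own ts i) (own i) (ts ! i)) \<le> k * enc_length T S + 2 * length S"
        by blast
      show "\<exists>ts. run_ok pr.P S own ts \<and>
            (\<forall>i < length S. s_out pr.P (shist S own ts i) (own i) (ts ! i) = S ! i) \<and>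
            (\<forall>i < length S. real (srv_bits pr.P (shist S own ts i) (own i) (ts ! i))
                 \<le> 6 * real (card M) powr (1 / real k) * log 2 (real (card M))) \<and>
            (\<Sum>i < length S. cli_bits pr.P (shist S own ts i) (own i) (ts ! i))
                 \<le> k * enc_length T S + 2 * length S"
        using ts Lb by (intro exI[of _ ts]) auto
    qed
  qed simp
qed

end
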